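(* Let $\mathcal{B}$ be a bounding family on $[n]^d$ with associated function $d_{\mathcal{B}}$, and let $\mathcal{D}=\prod_{r=1}^d\mathcal{D}_r$ be a product distribution on $[n]^d$ such that $\mu_{\mathcal{D}_r}(j)=q_r(j)/N$ for positive integer $N$ and nonnegative integers $q_r(j)$. With $\Phi$, $f_{ext}$, $d_{ext}$ as defined in the context, for every $f:[n]^d\to\mathbb{R}$, $$\mathrm{dist}_{\mathcal{D}}(f,\mathcal{P}(d_{\mathcal{B}}))=\mathrm{dist}_{\mathcal{U}}(f_{ext},\mathcal{P}(d_{ext})),$$ where $\mathcal{U}$ is the uniform distribution on $[N]^d$.
   Context: A bounding family is a tuple of $2d$ functions $l_1,u_1,\dots,l_d,u_d:[n-1]\to\mathbb{R}$ with $l_r(y)<u_r(y)$; $d_{\mathcal{B}}(x,y)=\sum_{r:x_r>y_r}\sum_{t=y_r}^{x_r-1}u_r(t)-\sum_{r:x_r<y_r}\sum_{t=x_r}^{y_r-1}l_r(t)$. For a function $\delta$ on pairs of points of a domain $X$, $\mathcal{P}(\delta)$ is the set of $g:X\to\mathbb{R}$ with $g(x)-g(y)\le\delta(x,y)$ for all $x,y\in X$ (so $\mathcal{P}(d_{\mathcal{B}})$ is the set of $f$ with $l_r(x_r)\le f(x+\mathbf{e}_r)-f(x)\le u_r(x_r)$). For $t\in[N]$, $\phi_r(t)$ is the unique $\ell\in[n]$ with $\sum_{j<\ell}q_r(j)<t\le\sum_{j\le\ell}q_r(j)$, and $\Phi:[N]^d\to[n]^d$, $\Phi(x)=(\phi_1(x_1),\dots,\phi_d(x_d))$.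 Define $f_{ext}(x)=f(\Phi(x))$ and $d_{ext}(x,y)=d_{\mathcal{B}}(\Phi(x),\Phi(y))$ for $x,y\in[N]^d$. $\mathrm{dist}_{\mathcal{D}}(f,\mathcal{P})=\inf_{g\in\mathcal{P}}\Pr_{x\sim\mathcal{D}}[f(x)\ne g(x)]$. *)

theory Defs
  imports Complex_Main
begin

text \<open>Points of [n]^d are functions from a finite index type 'd (the coordinates
  1..d) to nat with all values in {1..n}.\<close>

definition grid :: "nat \<Rightarrow> ('d::finite \<Rightarrow> nat) set" where
  "grid n = {x. \<forall>r. x r \<in> {1..n}}"

definition bounding_family :: "nat \<Rightarrow> ('d \<Rightarrow> nat \<Rightarrow> real) \<Rightarrow> ('d \<Rightarrow> nat \<Rightarrow> real) \<Rightarrow> bool" where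
  "bounding_family n l u \<longleftrightarrow> (\<forall>r. \<forall>y\<in>{1..n-1}. l r y < u r y)"

definition dB :: "('d::finite \<Rightarrow> nat \<Rightarrow> real) \<Rightarrow> ('d \<Rightarrow> nat \<Rightarrow> real)
    \<Rightarrow> ('d \<Rightarrow> nat) \<Rightarrow> ('d \<Rightarrow> nat) \<Rightarrow> real" where
  "dB l u x y =
     (\<Sum>r\<in>{r. x r > y r}. \<Sum>t\<in>{y r..x r - 1}. u r t)
   - (\<Sum>r\<in>{r. x r < y r}. \<Sum>t\<in>{x r..y r - 1}. l r t)"

definition Pset :: "'a set \<Rightarrow> ('a \<Rightarrow> 'a \<Rightarrow> real) \<Rightarrow> ('a \<Rightarrow> real) set" where
  "Pset X \<delta> = {g. \<forall>x\<in>X. \<forall>y\<in>X. g x - g y \<le> \<delta> x y}"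

definition dist_distr :: "'a set \<Rightarrow> ('a \<Rightarrow> real) \<Rightarrow> ('a \<Rightarrow> real) \<Rightarrow> ('a \<Rightarrow> real) set \<Rightarrow> real" where
  "dist_distr X w f P = (INF g\<in>P. \<Sum>x\<in>{x\<in>X. f x \<noteq> g x}. w x)"

definition prod_pmf_weights :: "nat \<Rightarrow> ('d::finite \<Rightarrow> nat \<Rightarrow> nat) \<Rightarrow> ('d \<Rightarrow> nat) \<Rightarrow> real" where
  "prod_pmf_weights N q x = (\<Prod>r\<in>UNIV. real (q r (x r)) / real N)"

definition uniform_weights :: "nat \<Rightarrow> ('d::finite \<Rightarrow> nat) \<Rightarrow> real" where
  "uniform_weights N x = 1 / real N ^ card (UNIV :: 'd set)"

definition phi :: "nat \<Rightarrow> ('d \<Rightarrow> nat \<Rightarrow> nat) \<Rightarrow> 'd \<Rightarrow> nat \<Rightarrow> nat" where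
  "phi n q r t = (THE l. l \<in> {1..n} \<and> (\<Sum>j\<in>{1..<l}. q r j) < t \<and> t \<le> (\<Sum>j\<in>{1..l}. q r j))"

definition Phi :: "nat \<Rightarrow> ('d \<Rightarrow> nat \<Rightarrow> nat) \<Rightarrow> ('d \<Rightarrow> nat) \<Rightarrow> ('d \<Rightarrow> nat)" where
  "Phi n q x = (\<lambda>r. phi n q r (x r))"

definition f_ext :: "nat \<Rightarrow> ('d \<Rightarrow> nat \<Rightarrow> nat) \<Rightarrow> (('d \<Rightarrow> nat) \<Rightarrow> real) \<Rightarrow> ('d \<Rightarrow> nat) \<Rightarrow> real" where
  "f_ext n q f x = f (Phi n q x)"

definition d_ext :: "nat \<Rightarrow> ('d::finite \<Rightarrow> nat \<Rightarrow> nat) \<Rightarrow> ('d \<Rightarrow> nat \<Rightarrow> real) \<Rightarrow> ('d \<Rightarrow> nat \<Rightarrow> real)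
    \<Rightarrow> ('d \<Rightarrow> nat) \<Rightarrow> ('d \<Rightarrow> nat) \<Rightarrow> real" where
  "d_ext n q l u x y = dB l u (Phi n q x) (Phi n q y)"

end

theory Submission
  imports Defs "HOL-Library.FuncSet"
begin

definition Pot :: "('d \<Rightarrow> nat \<Rightarrow> real) \<Rightarrow> 'd \<Rightarrow> nat \<Rightarrow> real" where
  "Pot v r a = (\<Sum>t\<in>{1..<a}. v r t)"

lemma seg: assumes "1 \<le> b" "b < a"
  shows "(\<Sum>t\<in>{b..a-1}. v r t) = Pot v r a - Pot v r b"
proof -
  have e: "{b..a-1} = {b..<a}" using assms by auto
  have "Pot v r a = Pot v r b + (\<Sum>t\<in>{b..<a}. v r t)"
    unfolding Pot_def using sum.atLeastLessThan_concat[of 1 b a "v r"] assms by simp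
  then show ?thesis using e by simp
qed

lemma coord:
  assumes lu: "\<forall>t\<in>{1..n-1}. l r t < u r t" and a: "a\<in>{1..n}" and b: "b\<in>{1..n}"
  shows "(if b < a then \<Sum>t\<in>{b..a-1}. u r t else 0) - (if a < b then \<Sum>t\<in>{a..b-1}. l r t else 0)
     = max (Pot u r a - Pot u r b) (Pot l r a - Pot l r b)"
proof (cases "b < a")
  case True
  have "(\<Sum>t\<in>{b..a-1}. l r t) \<le> (\<Sum>t\<in>{b..a-1}. u r t)"
    by (rule sum_mono) (use lu a b True in \<open>auto intro: less_imp_le\<close>)
  then show ?thesis using True seg[of b a l r] seg[of b a u r] b by auto
next
  case False
  show ?thesis
  proof (cases "a < b")
    case True
    have "(\<Sum>t\<in>{a..b-1}. l r t) \<le> (\<Sum>t\<in>{a..b-1}. u r t)"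
      by (rule sum_mono) (use lu a b True in \<open>auto intro: less_imp_le\<close>)
    then show ?thesis using True seg[of a b l r] seg[of a b u r] a by auto
  next
    case False
    then have "a = b" using \<open>\<not> b < a\<close> by auto
    then show ?thesis by simp
  qed
qed

lemma sum_filter_UNIV: "(\<Sum>r\<in>{r::'d::finite. P r}. g r) = (\<Sum>r\<in>UNIV. if P r then g r else (0::real))"
  using sum.inter_filter[of "UNIV::'d set" g P] by simp

lemma dB_max:
  fixes l u :: "'d::finite \<Rightarrow> nat \<Rightarrow> real"
  assumes bf: "bounding_family n l u" and x: "x \<in> grid n" and y: "y \<in> grid n"
  shows "dB l u x y = (\<Sum>r\<in>UNIV. max (Pot u r (x r) - Pot u r (y r)) (Pot l r (x r) - Pot l r (y r)))"
proof -
  have "dB l u x y = (\<Sum>r\<in>UNIV. (if y r < x r then \<Sum>t\<in>{y r..x r-1}. u r t else 0)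
      - (if x r < y r then \<Sum>t\<in>{x r..y r-1}. l r t else 0))"
    unfolding dB_def sum_filter_UNIV sum_subtractf by simp
  also have "\<dots> = (\<Sum>r\<in>UNIV. max (Pot u r (x r) - Pot u r (y r)) (Pot l r (x r) - Pot l r (y r)))"
    apply (rule sum.cong[OF refl])
    apply (rule coord)
    using bf x y unfolding bounding_family_def grid_def by auto
  finally show ?thesis .
qed

lemma dB_tri:
  fixes l u :: "'d::finite \<Rightarrow> nat \<Rightarrow> real"
  assumes bf: "bounding_family n l u" and x: "x \<in> grid n" and y: "y \<in> grid n" and z: "z \<in> grid n"
  shows "dB l u x z \<le> dB l u x y + dB l u y z"
  unfolding dB_max[OF bf x z] dB_max[OF bf x y] dB_max[OF bf y z] sum.distrib[symmetric]
  by (rule sum_mono) linarith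

lemma dB_refl: "dB l u x x = 0"
  unfolding dB_def by simp

lemma extend:
  fixes l u :: "'d::finite \<Rightarrow> nat \<Rightarrow> real"
    and S :: "('d \<Rightarrow> nat) set" and g0 :: "('d \<Rightarrow> nat) \<Rightarrow> real"
  assumes bf: "bounding_family n l u" and fin: "finite S" and ne: "S \<noteq> {}" and sub: "S \<subseteq> grid n"
    and lip: "\<forall>a\<in>S. \<forall>b\<in>S. g0 a - g0 b \<le> dB l u a b"
  shows "\<exists>g\<in>Pset (grid n) (dB l u). \<forall>a\<in>S. g a = g0 a"
proof -
  define g where "g x = Min ((\<lambda>a. g0 a + dB l u x a) ` S)" for x
  have le: "g x \<le> g0 a + dB l u x a" if "a \<in> S" for x a
    unfolding g_def using fin that by (intro Min_le) auto
  have ex: "\<exists>b\<in>S. g x = g0 b + dB l u x b" for x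
  proof -
    have "g x \<in> (\<lambda>a. g0 a + dB l u x a) ` S" unfolding g_def using fin ne by (intro Min_in) auto
    then show ?thesis by auto
  qed
  have "g \<in> Pset (grid n) (dB l u)"
    unfolding Pset_def
  proof (intro CollectI ballI)
    fix x y :: "'d \<Rightarrow> nat" assume x: "x \<in> grid n" and y: "y \<in> grid n"
    obtain b where b: "b \<in> S" "g y = g0 b + dB l u y b" using ex by blast
    have "g x \<le> g0 b + dB l u x b" using le b by auto
    also have "\<dots> \<le> g0 b + dB l u x y + dB l u y b" using dB_tri[OF bf x y] b sub by force
    finally show "g x - g y \<le> dB l u x y" using b by simp
  qed
  moreover have "\<forall>a\<in>S. g a = g0 a"
  proof
    fix a assume a: "a \<in> S"
    have "g a \<le> g0 a" using le[OF a, of a] by (simp add: dB_refl)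
    moreover obtain b where b: "b \<in> S" "g a = g0 b + dB l u a b" using ex by blast
    then have "g0 a \<le> g a" using lip a by force
    ultimately show "g a = g0 a" by simp
  qed
  ultimately show ?thesis by blast
qed

definition Sq :: "('d \<Rightarrow> nat \<Rightarrow> nat) \<Rightarrow> 'd \<Rightarrow> nat \<Rightarrow> nat" where
  "Sq q r k = (\<Sum>j\<in>{1..k}. q r j)"

lemma Sq_mono: "k \<le> m \<Longrightarrow> Sq q r k \<le> Sq q r m"
  unfolding Sq_def by (rule sum_mono2) auto

lemma Sq_pred: "1 \<le> l \<Longrightarrow> (\<Sum>j\<in>{1..<l}. q r j) = Sq q r (l-1)"
  unfolding Sq_def by (cases l) (auto simp: atLeastLessThanSuc_atLeastAtMost)

lemma Sq_step: "1 \<le> k \<Longrightarrow> Sq q r k = Sq q r (k-1) + q r k"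
  unfolding Sq_def by (cases k) auto

lemma phi_char:
  assumes sN: "Sq q r n = N" and t: "t \<in> {1..N}"
  shows "phi n q r t = l \<longleftrightarrow> (l \<in> {1..n} \<and> Sq q r (l-1) < t \<and> t \<le> Sq q r l)"
proof -
  define P where "P l \<longleftrightarrow> l \<in> {1..n} \<and> Sq q r (l-1) < t \<and> t \<le> Sq q r l" for l
  define l0 where "l0 = (LEAST l. t \<le> Sq q r l)"
  have tn: "t \<le> Sq q r n" using sN t by simp
  have l0: "t \<le> Sq q r l0" unfolding l0_def using tn by (rule LeastI)
  have l0n: "l0 \<le> n" unfolding l0_def using tn by (rule Least_le)
  have l00: "l0 \<noteq> 0"
  proof
    assume "l0 = 0" then show False using l0 t by (simp add: Sq_def)
  qed
  have "\<not> t \<le> Sq q r (l0-1)" unfolding l0_def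
    by (rule not_less_Least) (use l00 l0_def in auto)
  then have Pl0: "P l0" unfolding P_def using l0 l0n l00 by auto
  have uniq: "l = l0" if "P l" for l
  proof (rule ccontr)
    assume "l \<noteq> l0"
    then consider "l < l0" | "l0 < l" by linarith
    then show False
    proof cases
      case 1
      then have "Sq q r l \<le> Sq q r (l0-1)" by (intro Sq_mono) simp
      then show False using that Pl0 unfolding P_def by auto
    next
      case 2
      then have "Sq q r l0 \<le> Sq q r (l-1)" by (intro Sq_mono) simp
      then show False using that Pl0 unfolding P_def by auto
    qed
  qed
  have "\<exists>!l. P l" using Pl0 uniq by blast
  have eqP: "(\<lambda>l. l \<in> {1..n} \<and> (\<Sum>j\<in>{1..<l}. q r j) < t \<and> t \<le> (\<Sum>j\<in>{1..l}. q r j)) = P"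
  proof (rule ext)
    fix l
    show "(l \<in> {1..n} \<and> (\<Sum>j\<in>{1..<l}. q r j) < t \<and> t \<le> (\<Sum>j\<in>{1..l}. q r j)) = P l"
      unfolding P_def Sq_def[symmetric] using Sq_pred[of l q r] by auto
  qed
  have "phi n q r t = (THE l. P l)" unfolding phi_def eqP by (rule refl)
  also have "\<dots> = l0" by (rule the_equality[of P l0, OF Pl0 uniq])
  finally have ph: "phi n q r t = l0" .
  have "P l \<longleftrightarrow> l = l0" using uniq Pl0 by blast
  then show ?thesis using ph unfolding P_def by auto
qed

lemma PiE_UNIV_iff: "y \<in> PiE UNIV F \<longleftrightarrow> (\<forall>r. y r \<in> F r)"
  by (simp add: PiE_iff)

lemma grid_PiE: "grid n = PiE UNIV (\<lambda>_. {1..n})"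
  unfolding grid_def by (auto simp: PiE_UNIV_iff)

lemma finite_grid: "finite (grid n :: ('d::finite \<Rightarrow> nat) set)"
  unfolding grid_PiE by (rule finite_PiE) auto

lemma Phi_grid:
  fixes q :: "'d::finite \<Rightarrow> nat \<Rightarrow> nat"
  assumes sN: "\<forall>r. Sq q r n = N" and y: "y \<in> grid N"
  shows "Phi n q y \<in> grid n"
  unfolding grid_def Phi_def
proof (intro CollectI allI)
  fix r
  have "y r \<in> {1..N}" using y unfolding grid_def by auto
  then show "phi n q r (y r) \<in> {1..n}" using phi_char[of q r n N "y r" "phi n q r (y r)"] sN by blast
qed

lemma fiber:
  fixes q :: "'d::finite \<Rightarrow> nat \<Rightarrow> nat"
  assumes sN: "\<forall>r. Sq q r n = N" and a: "a \<in> grid n"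
  shows "{y\<in>grid N. Phi n q y = a} = PiE UNIV (\<lambda>r. {Suc (Sq q r (a r - 1)) .. Sq q r (a r)})"
proof (rule set_eqI)
  fix y :: "'d \<Rightarrow> nat"
  have ar: "a r \<in> {1..n}" for r using a unfolding grid_def by auto
  have "y \<in> grid N \<and> Phi n q y = a \<longleftrightarrow> (\<forall>r. y r \<in> {Suc (Sq q r (a r - 1)) .. Sq q r (a r)})"
  proof
    assume h: "y \<in> grid N \<and> Phi n q y = a"
    show "\<forall>r. y r \<in> {Suc (Sq q r (a r - 1)) .. Sq q r (a r)}"
    proof
      fix r
      have yr: "y r \<in> {1..N}" using h unfolding grid_def by auto
      have "phi n q r (y r) = a r" using h unfolding Phi_def by meson
      then show "y r \<in> {Suc (Sq q r (a r - 1)) .. Sq q r (a r)}"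
        using phi_char[of q r n N "y r" "a r"] sN yr by auto
    qed
  next
    assume h: "\<forall>r. y r \<in> {Suc (Sq q r (a r - 1)) .. Sq q r (a r)}"
    have yr: "y r \<in> {1..N}" for r
    proof -
      have "Sq q r (a r) \<le> Sq q r n" using ar[of r] by (intro Sq_mono) auto
      then show ?thesis using h sN by (auto intro: order_trans)
    qed
    have "phi n q r (y r) = a r" for r
      using phi_char[of q r n N "y r" "a r"] sN yr[of r] h[rule_format, of r] ar[of r] by (auto simp: Suc_le_eq)
    then show "y \<in> grid N \<and> Phi n q y = a"
      using yr unfolding grid_def Phi_def by auto
  qed
  then show "y \<in> {y\<in>grid N. Phi n q y = a} \<longleftrightarrow> y \<in> PiE UNIV (\<lambda>r. {Suc (Sq q r (a r - 1)) .. Sq q r (a r)})"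
    by (simp add: PiE_UNIV_iff)
qed

lemma card_fiber:
  fixes q :: "'d::finite \<Rightarrow> nat \<Rightarrow> nat"
  assumes sN: "\<forall>r. Sq q r n = N" and a: "a \<in> grid n"
  shows "card {y\<in>grid N. Phi n q y = a} = (\<Prod>r\<in>UNIV. q r (a r))"
proof -
  have ar: "a r \<ge> 1" for r using a unfolding grid_def by auto
  show ?thesis
    unfolding fiber[OF sN a] card_PiE[OF finite_UNIV]
    by (rule prod.cong[OF refl]) (simp add: Sq_step[OF ar])
qed

lemma transfer:
  fixes q :: "'d::finite \<Rightarrow> nat \<Rightarrow> nat"
  assumes sN: "\<forall>r. Sq q r n = N"
  shows "(\<Sum>y\<in>{y\<in>grid N. P (Phi n q y)}. uniform_weights N y) = (\<Sum>x\<in>{x\<in>grid n. P x}. prod_pmf_weights N q x)"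
proof -
  have "(\<Sum>y\<in>{y\<in>grid N. P (Phi n q y)}. uniform_weights N y)
     = (\<Sum>x\<in>{x\<in>grid n. P x}. \<Sum>y\<in>{y. y \<in> {y\<in>grid N. P (Phi n q y)} \<and> Phi n q y = x}. uniform_weights N y)"
  proof (rule sum.group[symmetric])
    show "finite {y\<in>grid N. P (Phi n q y)}" using finite_grid[of N] by (rule rev_finite_subset) auto
    show "finite {x\<in>grid n. P x}" using finite_grid[of n] by (rule rev_finite_subset) auto
  qed (use Phi_grid[OF sN] in auto)
  also have "\<dots> = (\<Sum>x\<in>{x\<in>grid n. P x}. prod_pmf_weights N q x)"
  proof (rule sum.cong[OF refl])
    fix x assume x: "x \<in> {x\<in>grid n. P x}"
    have e: "{y. y \<in> {y\<in>grid N. P (Phi n q y)} \<and> Phi n q y = x} = {y\<in>grid N. Phi n q y = x}"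
      using x by auto
    have "(\<Sum>y\<in>{y\<in>grid N. Phi n q y = x}. uniform_weights N y)
        = real (\<Prod>r\<in>UNIV. q r (x r)) * (1 / real N ^ card (UNIV :: 'd set))"
      unfolding uniform_weights_def using card_fiber[OF sN, of x] x by simp
    also have "\<dots> = prod_pmf_weights N q x"
      unfolding prod_pmf_weights_def prod_dividef prod_constant by simp
    finally show "(\<Sum>y\<in>{y. y \<in> {y\<in>grid N. P (Phi n q y)} \<and> Phi n q y = x}. uniform_weights N y) = prod_pmf_weights N q x"
      unfolding e .
  qed
  finally show ?thesis .
qed

theorem theorem3p8:
  fixes n N :: nat
    and l u :: "'d::finite \<Rightarrow> nat \<Rightarrow> real"
    and q :: "'d \<Rightarrow> nat \<Rightarrow> nat"
    and f :: "('d \<Rightarrow> nat) \<Rightarrow> real"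
  assumes "bounding_family n l u"
    and "N > 0"
    and "\<And>r. (\<Sum>j\<in>{1..n}. q r j) = N"
  shows "dist_distr (grid n) (prod_pmf_weights N q) f (Pset (grid n) (dB l u))
       = dist_distr (grid N) (uniform_weights N) (f_ext n q f) (Pset (grid N) (d_ext n q l u))"
proof -
  note bf = assms(1)
  have sN: "\<forall>r. Sq q r n = N" using assms(3) unfolding Sq_def by simp
  define v1 where "v1 g = (\<Sum>x\<in>{x\<in>grid n. f x \<noteq> g x}. prod_pmf_weights N q x)" for g
  define v2 where "v2 h = (\<Sum>y\<in>{y\<in>grid N. f_ext n q f y \<noteq> h y}. uniform_weights N y)" for h
  have key: "v2 (\<lambda>y. g (Phi n q y)) = v1 g" for g
    unfolding v1_def v2_def f_ext_def using transfer[OF sN, of "\<lambda>x. f x \<noteq> g x"] by simp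
  have "v1 ` Pset (grid n) (dB l u) = v2 ` Pset (grid N) (d_ext n q l u)"
  proof (intro equalityI subsetI)
    fix z assume "z \<in> v1 ` Pset (grid n) (dB l u)"
    then obtain g where g: "g \<in> Pset (grid n) (dB l u)" "z = v1 g" by blast
    have "(\<lambda>y. g (Phi n q y)) \<in> Pset (grid N) (d_ext n q l u)"
      using g(1) Phi_grid[OF sN] unfolding Pset_def d_ext_def by auto
    then show "z \<in> v2 ` Pset (grid N) (d_ext n q l u)" using key g(2) by (metis image_eqI)
  next
    fix z assume "z \<in> v2 ` Pset (grid N) (d_ext n q l u)"
    then obtain h where h: "h \<in> Pset (grid N) (d_ext n q l u)" "z = v2 h" by blast
    define g0 where "g0 a = h (SOME y. y \<in> grid N \<and> Phi n q y = a)" for a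
    have const: "h y = h y'" if "y \<in> grid N" "y' \<in> grid N" "Phi n q y = Phi n q y'" for y y'
    proof -
      have "h y - h y' \<le> dB l u (Phi n q y) (Phi n q y')" "h y' - h y \<le> dB l u (Phi n q y') (Phi n q y)"
        using h(1) that(1,2) unfolding Pset_def d_ext_def by blast+
      then have "h y - h y' \<le> 0" "h y' - h y \<le> 0" using that(3) by (auto simp: dB_refl)
      then show ?thesis by simp
    qed
    have hg0: "h y = g0 (Phi n q y)" if y: "y \<in> grid N" for y
    proof -
      have "\<exists>y'. y' \<in> grid N \<and> Phi n q y' = Phi n q y" using y by blast
      then have "(SOME y'. y' \<in> grid N \<and> Phi n q y' = Phi n q y) \<in> grid N \<and>
          Phi n q (SOME y'. y' \<in> grid N \<and> Phi n q y' = Phi n q y) = Phi n q y"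
        by (rule someI_ex)
      then show ?thesis unfolding g0_def using const y by metis
    qed
    have ne: "Phi n q ` grid N \<noteq> {}"
    proof -
      have "(\<lambda>_. 1) \<in> grid N" using assms(2) unfolding grid_def by auto
      then show ?thesis by blast
    qed
    have lip: "\<forall>a\<in>Phi n q ` grid N. \<forall>b\<in>Phi n q ` grid N. g0 a - g0 b \<le> dB l u a b"
    proof (intro ballI)
      fix a b assume "a \<in> Phi n q ` grid N" "b \<in> Phi n q ` grid N"
      then obtain y y' where yy: "y \<in> grid N" "y' \<in> grid N" "a = Phi n q y" "b = Phi n q y'" by blast
      have "h y - h y' \<le> dB l u (Phi n q y) (Phi n q y')"
        using h(1) yy(1,2) unfolding Pset_def d_ext_def by blast
      then show "g0 a - g0 b \<le> dB l u a b"
        using hg0[OF yy(1)] hg0[OF yy(2)] yy(3,4) by simp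
    qed
    obtain g where g: "g \<in> Pset (grid n) (dB l u)" "\<forall>a\<in>Phi n q ` grid N. g a = g0 a"
      using extend[OF bf finite_imageI[OF finite_grid] ne _ lip] Phi_grid[OF sN] by blast
    have "v2 h = v2 (\<lambda>y. g (Phi n q y))"
      unfolding v2_def using g(2) hg0 by (intro sum.cong) auto
    then have "z = v1 g" using h(2) key by simp
    then show "z \<in> v1 ` Pset (grid n) (dB l u)" using g(1) by blast
  qed
  then show ?thesis unfolding dist_distr_def v1_def v2_def by simp
qed

end
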